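(* Let $K$ be a quasi-arithmetic self-similar compact set of ratio $\rho$ and module $\mu$, and put $T_u=K^{(u)}\setminus K^{(u+1)}$ for $u\ge0$. Let $n\in\mathbf{N}$, $p,q\in\mathbf{Z}$ and $v,w\in\mathbf{Z}_{\ge0}$ with $n/\rho^p\in T_v$ and $n/\rho^q\in T_w$. Then $p\mu-v=q\mu-w$.
   Context: For $A\subset\mathbf{R}$, $A'$ denotes the derived set, $A^{(0)}=A$, $A^{(n+1)}=(A^{(n)})'$. The reverse usual order is $x\preccurlyeq y$ iff $x\ge y$. A self-similar compact set of ratio $\rho>1$ and module $\mu\in\mathbf{N}$ is a compact set $K\subset[0,+\infty)$ with $\rho K^{(\mu)}=K$, well ordered by $\preccurlyeq$, of order type $\omega^\omega+1$. Such $K$ is called quasi-arithmetic if $\rho\ge2$ is a natural number and there is a function $\kappa\colon\mathbf{N}\setminus\rho\mathbf{N}\to\mathbf{Z}_{\ge0}$ with $K\setminus\{0\}=\{m/\rho^k: m\in\mathbf{N},\ \rho\nmid m,\ k\in\mathbf{Z},\ k\ge\kappa(m)\}$. *)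

theory Defs
  imports "HOL-Analysis.Analysis"
begin

definition derived_set :: "real set \<Rightarrow> real set" where
  "derived_set A = {x. x islimpt A}"

definition iter_derived :: "nat \<Rightarrow> real set \<Rightarrow> real set" where
  "iter_derived n A = (derived_set ^^ n) A"

text \<open>A concrete model of the ordinal omega^omega + 1.
  Elements of omega^omega are Cantor normal forms
  omega^k a_k + ... + omega^0 a_0, encoded as lists [a_k, ..., a_0] with a_k > 0
  (the empty list is 0), ordered first by length and then lexicographically.\<close>
definition cnf_set :: "nat list set" where
  "cnf_set = {xs. xs = [] \<or> hd xs \<noteq> 0}"

definition omega_omega_plus_one :: "nat list option set" where
  "omega_omega_plus_one = insert None (Some ` cnf_set)"

fun oo1_less :: "nat list option \<Rightarrow> nat list option \<Rightarrow> bool" where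
  "oo1_less (Some xs) (Some ys) = ((xs, ys) \<in> lenlex less_than)"
| "oo1_less (Some xs) None = True"
| "oo1_less None _ = False"

definition oo1_le :: "nat list option \<Rightarrow> nat list option \<Rightarrow> bool" where
  "oo1_le a b = (a = b \<or> oo1_less a b)"

definition rev_order_type_omega_omega_plus_one :: "real set \<Rightarrow> bool" where
  "rev_order_type_omega_omega_plus_one K =
     (\<exists>f. bij_betw f K omega_omega_plus_one \<and>
          (\<forall>x\<in>K. \<forall>y\<in>K. (x \<ge> y) = oo1_le (f x) (f y)))"

definition rev_well_ordered :: "real set \<Rightarrow> bool" where
  "rev_well_ordered K = (\<forall>S. S \<subseteq> K \<longrightarrow> S \<noteq> {} \<longrightarrow> (\<exists>m\<in>S. \<forall>s\<in>S. s \<le> m))"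

definition self_similar :: "real set \<Rightarrow> real \<Rightarrow> nat \<Rightarrow> bool" where
  "self_similar K \<rho> \<mu> =
     (compact K \<and> K \<subseteq> {0..} \<and> \<rho> > 1 \<and> \<mu> \<ge> 1 \<and>
      (\<lambda>x. \<rho> * x) ` iter_derived \<mu> K = K \<and>
      rev_well_ordered K \<and> rev_order_type_omega_omega_plus_one K)"

definition quasi_arithmetic :: "real set \<Rightarrow> nat \<Rightarrow> nat \<Rightarrow> bool" where
  "quasi_arithmetic K \<rho> \<mu> =
     (self_similar K (real \<rho>) \<mu> \<and> \<rho> \<ge> 2 \<and>
      (\<exists>\<kappa> :: nat \<Rightarrow> int. (\<forall>m. m \<ge> 1 \<longrightarrow> \<not> \<rho> dvd m \<longrightarrow> \<kappa> m \<ge> 0) \<and>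
         K - {0} = {real m / (real \<rho>) powi k | m k. m \<ge> 1 \<and> \<not> \<rho> dvd m \<and> k \<ge> \<kappa> m}))"

end

theory Submission
  imports Defs
begin

lemma limpt_scale1:
  fixes c :: real
  assumes "c \<noteq> 0" "x islimpt A"
  shows "c * x islimpt (\<lambda>y. c * y) ` A"
proof (rule islimpt_isCont_image[OF assms(2)])
  show "isCont (\<lambda>y. c * y) x" by simp
  show "\<forall>\<^sub>F y in at x. c * y \<noteq> c * x"
    using assms(1) by (auto simp: eventually_at_filter)
qed

lemma derived_scale:
  fixes c :: real
  assumes "c \<noteq> 0"
  shows "derived_set ((\<lambda>y. c * y) ` A) = (\<lambda>y. c * y) ` derived_set A"
proof
  show "(\<lambda>y. c * y) ` derived_set A \<subseteq> derived_set ((\<lambda>y. c * y) ` A)"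
    using limpt_scale1[OF assms] by (auto simp: derived_set_def)
next
  show "derived_set ((\<lambda>y. c * y) ` A) \<subseteq> (\<lambda>y. c * y) ` derived_set A"
  proof
    fix z assume "z \<in> derived_set ((\<lambda>y. c * y) ` A)"
    hence z: "z islimpt (\<lambda>y. c * y) ` A" by (simp add: derived_set_def)
    have "inverse c * z islimpt (\<lambda>y. inverse c * y) ` ((\<lambda>y. c * y) ` A)"
      using limpt_scale1[OF _ z] assms by simp
    moreover have "(\<lambda>y. inverse c * y) ` ((\<lambda>y. c * y) ` A) = A"
      using assms by (simp add: image_image mult.assoc[symmetric])
    ultimately have "inverse c * z \<in> derived_set A" by (simp add: derived_set_def)
    moreover have "z = c * (inverse c * z)" using assms by simp
    ultimately show "z \<in> (\<lambda>y. c * y) ` derived_set A" by blast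
  qed
qed

lemma iter_scale:
  fixes c :: real
  assumes "c \<noteq> 0"
  shows "iter_derived k ((\<lambda>y. c * y) ` A) = (\<lambda>y. c * y) ` iter_derived k A"
  by (induction k) (simp_all add: iter_derived_def derived_scale[OF assms])

lemma iter_add: "iter_derived (a + b) A = iter_derived a (iter_derived b A)"
  by (simp add: iter_derived_def funpow_add)

lemma iter_closed: "closed A \<Longrightarrow> closed (iter_derived k A)"
  by (induction k) (simp_all add: iter_derived_def derived_set_def closed_limpts)

lemma iter_Suc_sub: "closed A \<Longrightarrow> iter_derived (Suc k) A \<subseteq> iter_derived k A"
  using iter_closed[of A k] closed_limpt[of "iter_derived k A"]
  by (auto simp: iter_derived_def derived_set_def)

lemma iter_mono: "closed A \<Longrightarrow> a \<le> b \<Longrightarrow> iter_derived b A \<subseteq> iter_derived a A"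
proof -
  assume cl: "closed A" and ab: "a \<le> b"
  show ?thesis using ab
  proof (induction b rule: dec_induct)
    case base then show ?case by simp
  next
    case (step b) then show ?case using iter_Suc_sub[OF cl, of b] by blast
  qed
qed

lemma T_disj:
  assumes "closed A" "x \<in> iter_derived a A - iter_derived (a+1) A"
    "x \<in> iter_derived b A - iter_derived (b+1) A"
  shows "a = b"
proof (rule ccontr)
  assume "a \<noteq> b"
  then consider "a + 1 \<le> b" | "b + 1 \<le> a" by linarith
  then show False
    using assms iter_mono[OF assms(1)] by cases blast+
qed

lemma iter_mult:
  fixes r :: real
  assumes "r \<noteq> 0" "(\<lambda>x. r * x) ` iter_derived m K = K"
  shows "iter_derived (m * j) K = (\<lambda>x. inverse r ^ j * x) ` K"
proof (induction j)
  case 0 then show ?case by (simp add: iter_derived_def)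
next
  case (Suc j)
  have im: "iter_derived m K = (\<lambda>x. inverse r * x) ` K"
  proof -
    have "(\<lambda>x. inverse r * x) ` K = (\<lambda>x. inverse r * x) ` (\<lambda>x. r * x) ` iter_derived m K"
      using assms(2) by simp
    also have "\<dots> = iter_derived m K" using assms(1) by (simp add: image_image mult.assoc[symmetric])
    finally show ?thesis by simp
  qed
  have "iter_derived (m * Suc j) K = iter_derived m (iter_derived (m * j) K)"
    by (metis iter_add mult_Suc_right)
  also have "\<dots> = (\<lambda>x. inverse r ^ j * x) ` iter_derived m K"
    using Suc assms(1) by (simp add: iter_scale)
  also have "\<dots> = (\<lambda>x. inverse r ^ Suc j * x) ` K"
    using im by (simp add: image_image mult.assoc[symmetric] mult.commute)
  finally show ?case .
qed

lemma T_shift: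
  fixes r :: real
  assumes "r \<noteq> 0" "(\<lambda>x. r * x) ` iter_derived m K = K"
    and "x \<in> iter_derived u K - iter_derived (u+1) K"
  shows "inverse r ^ j * x \<in> iter_derived (u + m * j) K - iter_derived (u + m * j + 1) K"
proof -
  have c: "inverse r ^ j \<noteq> 0" using assms(1) by simp
  have e: "\<And>t. iter_derived (t + m * j) K = (\<lambda>y. inverse r ^ j * y) ` iter_derived t K"
    using iter_add iter_mult[OF assms(1,2)] iter_scale[OF c] by metis
  have inj: "inj (\<lambda>y. inverse r ^ j * y)" using c by (auto simp: inj_on_def)
  have "u + m * j + 1 = (u + 1) + m * j" by simp
  then show ?thesis using e[of u] e[of "u+1"] assms(3) inj
    by (auto simp: inj_image_mem_iff)
qed

theorem mainTheorem5:
  fixes K :: "real set" and \<rho> \<mu> n v w :: nat and p q :: int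
  assumes "quasi_arithmetic K \<rho> \<mu>"
    and "n \<ge> 1"
    and "real n / (real \<rho>) powi p \<in> iter_derived v K - iter_derived (v + 1) K"
    and "real n / (real \<rho>) powi q \<in> iter_derived w K - iter_derived (w + 1) K"
  shows "p * int \<mu> - int v = q * int \<mu> - int w"
proof -
  have ss: "self_similar K (real \<rho>) \<mu>" and r2: "\<rho> \<ge> 2"
    using assms(1) by (auto simp: quasi_arithmetic_def)
  have cl: "closed K" using ss by (auto simp: self_similar_def compact_imp_closed)
  have sc: "(\<lambda>x. real \<rho> * x) ` iter_derived \<mu> K = K" using ss by (simp add: self_similar_def)
  have r0: "real \<rho> \<noteq> 0" using r2 by simp
  have key: "\<And>p q v w. p \<le> q \<Longrightarrow>
      real n / (real \<rho>) powi p \<in> iter_derived v K - iter_derived (v + 1) K \<Longrightarrow>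
      real n / (real \<rho>) powi q \<in> iter_derived w K - iter_derived (w + 1) K \<Longrightarrow>
      p * int \<mu> - int v = q * int \<mu> - int w"
  proof -
    fix p q :: int and v w :: nat
    assume pq: "p \<le> q" and hv: "real n / (real \<rho>) powi p \<in> iter_derived v K - iter_derived (v + 1) K"
      and hw: "real n / (real \<rho>) powi q \<in> iter_derived w K - iter_derived (w + 1) K"
    define j where "j = nat (q - p)"
    have qj: "q = p + int j" using pq by (simp add: j_def)
    have eq: "real n / (real \<rho>) powi q = inverse (real \<rho>) ^ j * (real n / (real \<rho>) powi p)"
      using r0 by (simp add: qj power_int_add power_int_inverse field_simps)
    have "real n / (real \<rho>) powi q \<in> iter_derived (v + \<mu> * j) K - iter_derived (v + \<mu> * j + 1) K"
      unfolding eq by (rule T_shift[OF r0 sc hv])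
    with hw cl have "w = v + \<mu> * j" using T_disj by blast
    then show "p * int \<mu> - int v = q * int \<mu> - int w" by (simp add: qj algebra_simps)
  qed
  show ?thesis
  proof (cases "p \<le> q")
    case True then show ?thesis using key assms(3,4) by blast
  next
    case False
    then have "q * int \<mu> - int w = p * int \<mu> - int v" using key assms(3,4) by simp
    then show ?thesis by simp
  qed
qed

end
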